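(* Let $\mathcal{O}$ be the class of finite ordinal potential games, and let $\phi$ assign to each $\Gamma\in\mathcal{O}$ the set $\phi(\Gamma)$ of strongly maximal equilibria of $\Gamma$. Then $\phi$ satisfies: (i) existence: $\phi(\Gamma)\neq\emptyset$ for every $\Gamma\in\mathcal{O}$; (ii) one-person rationality: for every one-player game $\Gamma\in\mathcal{O}$, $\phi(\Gamma)$ is the set of strategies maximizing the player's payoff; (iii) consistency: for every $\Gamma=(I,(S_i),(u_i))\in\mathcal{O}$, every nonempty proper subset $J\subsetneq I$ and every $s^*\in\phi(\Gamma)$, the reduced game $\Gamma^{J,s^*}$ belongs to $\mathcal{O}$ and $s^*_J=(s^*_j)_{j\in J}\in\phi(\Gamma^{J,s^*})$.
   Context: A finite strategic-form game $\Gamma=(I,(S_i)_{i\in I},(u_i)_{i\in I})$ has finite player set $I$, finite nonempty strategy sets $S_i$, utilities $u_i:S\to\mathbb{R}$, $S=\prod_i S_i$; $(s_i',s_{-i})$ denotes $s$ with player $i$'s strategy replaced by $s_i'$. A pure Nash equilibrium is $s\in S$ with $u_i(s)\ge u_i(s_i',s_{-i})$ for all $i$ and $s_i'\in S_i$. A function $P:S\to\mathbb{R}$ is an ordinal potential if for all $i$, $a,b\in S_i$, $\sigma_{-i}\in S_{-i}$: $u_i(a,\sigma_{-i})>u_i(b,\sigma_{-i})\iff P(a,\sigma_{-i})>P(b,\sigma_{-i})$; $\Gamma$ is an ordinal potential game if one exists. The ordinal deployment graph has vertex set $S$ and an arc $(s,s')$, $s'\neq s$, iff $s'=(s_i',s_{-i})$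 for some $i$ with $u_i(s')\ge u_i(s)$. Define $s\succeq s'$ iff there is a directed path (possibly of length $0$) from $s'$ to $s$, and $s\succ s'$ iff $s\succeq s'$ and not $s'\succeq s$. A strongly maximal state is an $s^*$ with no $s$ satisfying $s\succ s^*$. Two states communicate if each is reachable from the other by a directed path. A strongly maximal equilibrium is a strongly maximal state $s$ such that every state communicating with $s$ (including $s$) is a pure Nash equilibrium. For a nonempty proper subset $J\subsetneq I$ and $s\in S$, the reduced game $\Gamma^{J,s}=(J,(S_j)_{j\in J},(w_j)_{j\in J})$ has player set $J$, the same strategy sets $S_j$, and payoffs $w_j(\sigma)=u_j(\sigma,s_{-J})$ for $\sigma\in\prod_{j\in J}S_j$, where $s_{-J}$ are the strategies of the players outside $J$ in $s$. *)

theory Defs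
  imports "HOL-Library.FuncSet" Complex_Main
begin

text \<open>A finite strategic-form game is given by a player set I, strategy sets S i (i in I)
and utilities u i defined on profiles.  Profiles are extensional functions in
PiE I S (value undefined outside I).\<close>

definition profiles :: "'p set \<Rightarrow> ('p \<Rightarrow> 's set) \<Rightarrow> ('p \<Rightarrow> 's) set" where
  "profiles I S = PiE I S"

definition finite_game :: "'p set \<Rightarrow> ('p \<Rightarrow> 's set) \<Rightarrow> bool" where
  "finite_game I S \<longleftrightarrow> finite I \<and> (\<forall>i\<in>I. finite (S i) \<and> S i \<noteq> {})"

definition is_pure_nash :: "'p set \<Rightarrow> ('p \<Rightarrow> 's set) \<Rightarrow> ('p \<Rightarrow> ('p \<Rightarrow> 's) \<Rightarrow> real) \<Rightarrow> ('p \<Rightarrow> 's) \<Rightarrow> bool" where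
  "is_pure_nash I S u s \<longleftrightarrow> s \<in> profiles I S \<and> (\<forall>i\<in>I. \<forall>a\<in>S i. u i (s(i := a)) \<le> u i s)"

definition ordinal_potential :: "'p set \<Rightarrow> ('p \<Rightarrow> 's set) \<Rightarrow> ('p \<Rightarrow> ('p \<Rightarrow> 's) \<Rightarrow> real) \<Rightarrow> (('p \<Rightarrow> 's) \<Rightarrow> real) \<Rightarrow> bool" where
  "ordinal_potential I S u P \<longleftrightarrow>
     (\<forall>i\<in>I. \<forall>a\<in>S i. \<forall>b\<in>S i. \<forall>\<sigma>\<in>profiles I S.
        u i (\<sigma>(i := a)) > u i (\<sigma>(i := b)) \<longleftrightarrow> P (\<sigma>(i := a)) > P (\<sigma>(i := b)))"

definition ordinal_potential_game :: "'p set \<Rightarrow> ('p \<Rightarrow> 's set) \<Rightarrow> ('p \<Rightarrow> ('p \<Rightarrow> 's) \<Rightarrow> real) \<Rightarrow> bool" where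
  "ordinal_potential_game I S u \<longleftrightarrow> finite_game I S \<and> (\<exists>P. ordinal_potential I S u P)"

definition deploy_arc :: "'p set \<Rightarrow> ('p \<Rightarrow> 's set) \<Rightarrow> ('p \<Rightarrow> ('p \<Rightarrow> 's) \<Rightarrow> real) \<Rightarrow> ('p \<Rightarrow> 's) \<Rightarrow> ('p \<Rightarrow> 's) \<Rightarrow> bool" where
  "deploy_arc I S u s s' \<longleftrightarrow> s \<in> profiles I S \<and> s' \<in> profiles I S \<and> s' \<noteq> s \<and>
     (\<exists>i\<in>I. s' = s(i := s' i) \<and> u i s' \<ge> u i s)"

definition reachable :: "'p set \<Rightarrow> ('p \<Rightarrow> 's set) \<Rightarrow> ('p \<Rightarrow> ('p \<Rightarrow> 's) \<Rightarrow> real) \<Rightarrow> ('p \<Rightarrow> 's) \<Rightarrow> ('p \<Rightarrow> 's) \<Rightarrow> bool" where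
  "reachable I S u = (deploy_arc I S u)\<^sup>*\<^sup>*"

definition strictly_above :: "'p set \<Rightarrow> ('p \<Rightarrow> 's set) \<Rightarrow> ('p \<Rightarrow> ('p \<Rightarrow> 's) \<Rightarrow> real) \<Rightarrow> ('p \<Rightarrow> 's) \<Rightarrow> ('p \<Rightarrow> 's) \<Rightarrow> bool" where
  "strictly_above I S u s s' \<longleftrightarrow> reachable I S u s' s \<and> \<not> reachable I S u s s'"

definition strongly_maximal :: "'p set \<Rightarrow> ('p \<Rightarrow> 's set) \<Rightarrow> ('p \<Rightarrow> ('p \<Rightarrow> 's) \<Rightarrow> real) \<Rightarrow> ('p \<Rightarrow> 's) \<Rightarrow> bool" where
  "strongly_maximal I S u s \<longleftrightarrow> s \<in> profiles I S \<and> \<not> (\<exists>t\<in>profiles I S. strictly_above I S u t s)"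

definition communicate :: "'p set \<Rightarrow> ('p \<Rightarrow> 's set) \<Rightarrow> ('p \<Rightarrow> ('p \<Rightarrow> 's) \<Rightarrow> real) \<Rightarrow> ('p \<Rightarrow> 's) \<Rightarrow> ('p \<Rightarrow> 's) \<Rightarrow> bool" where
  "communicate I S u s t \<longleftrightarrow> reachable I S u s t \<and> reachable I S u t s"

definition strongly_maximal_equilibrium :: "'p set \<Rightarrow> ('p \<Rightarrow> 's set) \<Rightarrow> ('p \<Rightarrow> ('p \<Rightarrow> 's) \<Rightarrow> real) \<Rightarrow> ('p \<Rightarrow> 's) \<Rightarrow> bool" where
  "strongly_maximal_equilibrium I S u s \<longleftrightarrow> strongly_maximal I S u s \<and>
     (\<forall>t. communicate I S u s t \<longrightarrow> is_pure_nash I S u t)"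

definition SME :: "'p set \<Rightarrow> ('p \<Rightarrow> 's set) \<Rightarrow> ('p \<Rightarrow> ('p \<Rightarrow> 's) \<Rightarrow> real) \<Rightarrow> ('p \<Rightarrow> 's) set" where
  "SME I S u = {s. strongly_maximal_equilibrium I S u s}"

text \<open>Payoffs of the reduced game Gamma^{J,s}: w j sigma = u j (sigma, s_{-J}).
 Player set J, same strategy sets S.\<close>
definition reduced_payoff :: "'p set \<Rightarrow> ('p \<Rightarrow> 's) \<Rightarrow> ('p \<Rightarrow> ('p \<Rightarrow> 's) \<Rightarrow> real) \<Rightarrow> 'p \<Rightarrow> ('p \<Rightarrow> 's) \<Rightarrow> real" where
  "reduced_payoff J s u j \<sigma> = u j (\<lambda>k. if k \<in> J then \<sigma> k else s k)"

end

theory Submission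
  imports Defs
begin

lemma prof_upd: "s \<in> profiles I S \<Longrightarrow> i \<in> I \<Longrightarrow> a \<in> S i \<Longrightarrow> s(i := a) \<in> profiles I S"
  unfolding profiles_def using PiE_fun_upd[of a S i s I] by (simp add: insert_absorb)

lemma arc_prof: "deploy_arc I S u s t \<Longrightarrow> s \<in> profiles I S \<and> t \<in> profiles I S"
  unfolding deploy_arc_def by blast

lemma reach_prof: "reachable I S u s t \<Longrightarrow> s \<in> profiles I S \<Longrightarrow> t \<in> profiles I S"
  unfolding reachable_def by (induction rule: rtranclp_induct) (auto dest: arc_prof)

lemma reach_trans: "reachable I S u s t \<Longrightarrow> reachable I S u t r \<Longrightarrow> reachable I S u s r"
  unfolding reachable_def by auto

lemma reach_arc: "deploy_arc I S u s t \<Longrightarrow> reachable I S u s t"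
  unfolding reachable_def by auto

lemma sm_iff: "strongly_maximal I S u s \<longleftrightarrow>
   s \<in> profiles I S \<and> (\<forall>t. reachable I S u s t \<longrightarrow> reachable I S u t s)"
  unfolding strongly_maximal_def strictly_above_def using reach_prof by blast

lemma nash_reverse:
  assumes "is_pure_nash I S u y" "deploy_arc I S u y z"
  shows "deploy_arc I S u z y"
proof -
  obtain i where i: "i \<in> I" "z = y(i := z i)" "u i z \<ge> u i y" and pr: "y \<in> profiles I S" "z \<in> profiles I S" "z \<noteq> y"
    using assms(2) unfolding deploy_arc_def by blast
  have "z i \<in> S i" using pr(2) i(1) unfolding profiles_def by auto
  hence "u i (y(i := z i)) \<le> u i y" using assms(1) i(1) unfolding is_pure_nash_def by auto
  hence "u i y \<ge> u i z" using i(2) by simp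
  moreover have "y = z(i := y i)" using i(2) proof -
    have "z(i := y i) = (y(i := z i))(i := y i)" using i(2) by (rule arg_cong[where f="\<lambda>f. f(i := y i)"])
    thus ?thesis by simp
  qed
  ultimately show ?thesis using pr i(1) unfolding deploy_arc_def by blast
qed

lemma pot_arc:
  assumes "ordinal_potential I S u P" "deploy_arc I S u s t"
  shows "P s \<le> P t"
proof -
  obtain i where i: "i \<in> I" "t = s(i := t i)" "u i t \<ge> u i s" and pr: "s \<in> profiles I S" "t \<in> profiles I S"
    using assms(2) unfolding deploy_arc_def by blast
  have a: "s i \<in> S i" "t i \<in> S i" using pr i(1) unfolding profiles_def by auto
  have "u i (s(i := s i)) > u i (s(i := t i)) \<longleftrightarrow> P (s(i := s i)) > P (s(i := t i))"
    using assms(1) i(1) a pr(1) unfolding ordinal_potential_def by blast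
  moreover have "s(i := t i) = t" using i(2) by (rule sym)
  ultimately have "u i s > u i t \<longleftrightarrow> P s > P t" by simp
  thus ?thesis using i(3) by linarith
qed

lemma pot_reach:
  assumes "ordinal_potential I S u P" "reachable I S u s t"
  shows "P s \<le> P t"
  using assms(2) unfolding reachable_def
  by (induction rule: rtranclp_induct) (auto dest: pot_arc[OF assms(1)])

lemma closed_nash:
  assumes pot: "ordinal_potential I S u P" and s: "s \<in> profiles I S"
    and cl: "\<forall>t. reachable I S u s t \<longrightarrow> reachable I S u t s"
    and r: "reachable I S u s t"
  shows "is_pure_nash I S u t"
proof -
  have t: "t \<in> profiles I S" using reach_prof r s by blast
  { fix i a assume i: "i \<in> I" and a: "a \<in> S i" and lt: "u i (t(i := a)) > u i t"
    define t' where "t' = t(i := a)"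
    have t': "t' \<in> profiles I S" unfolding t'_def by (rule prof_upd[OF t i a])
    have ne: "t' \<noteq> t" using lt unfolding t'_def by auto
    have arc: "deploy_arc I S u t t'" unfolding deploy_arc_def using t t' ne i lt
      by (auto simp: t'_def)
    have "reachable I S u s t'" by (rule reach_trans[OF r reach_arc[OF arc]])
    hence "reachable I S u t' s" using cl by blast
    hence "reachable I S u t' t" by (rule reach_trans[OF _ r])
    hence le: "P t' \<le> P t" by (rule pot_reach[OF pot])
    have ti: "t i \<in> S i" using t i unfolding profiles_def by auto
    have "u i (t(i := a)) > u i (t(i := t i)) \<longleftrightarrow> P (t(i := a)) > P (t(i := t i))"
      using pot i a ti t unfolding ordinal_potential_def by blast
    hence False using lt le by (simp add: t'_def)
  }
  thus ?thesis using t unfolding is_pure_nash_def by force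
qed

lemma sme_iff_closed:
  assumes pot: "ordinal_potential I S u P"
  shows "s \<in> SME I S u \<longleftrightarrow> s \<in> profiles I S \<and> (\<forall>t. reachable I S u s t \<longrightarrow> reachable I S u t s)"
proof
  assume "s \<in> SME I S u"
  thus "s \<in> profiles I S \<and> (\<forall>t. reachable I S u s t \<longrightarrow> reachable I S u t s)"
    unfolding SME_def strongly_maximal_equilibrium_def sm_iff by blast
next
  assume h: "s \<in> profiles I S \<and> (\<forall>t. reachable I S u s t \<longrightarrow> reachable I S u t s)"
  have "\<forall>t. communicate I S u s t \<longrightarrow> is_pure_nash I S u t"
  proof (intro allI impI)
    fix t assume "communicate I S u s t"
    hence "reachable I S u s t" unfolding communicate_def by blast
    thus "is_pure_nash I S u t" using closed_nash[OF pot] h by blast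
  qed
  thus "s \<in> SME I S u" using h unfolding SME_def strongly_maximal_equilibrium_def sm_iff by blast
qed

lemma part1:
  assumes "ordinal_potential_game I S u"
  shows "SME I S u \<noteq> {}"
proof -
  obtain P where pot: "ordinal_potential I S u P" using assms ordinal_potential_game_def by blast
  have fg: "finite_game I S" using assms ordinal_potential_game_def by blast
  have fin: "finite (profiles I S)" using fg unfolding finite_game_def profiles_def
    by (simp add: finite_PiE)
  have ne: "profiles I S \<noteq> {}" using fg unfolding finite_game_def profiles_def
    by (simp add: PiE_eq_empty_iff)
  define R where "R t = {r. reachable I S u t r}" for t
  obtain s0 where "s0 \<in> profiles I S" using ne by blast
  then obtain s where s: "s \<in> profiles I S" and mn: "\<forall>t. t \<in> profiles I S \<longrightarrow> card (R s) \<le> card (R t)"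
    using ex_has_least_nat[of "\<lambda>x. x \<in> profiles I S" s0 "\<lambda>t. card (R t)"] by blast
  have cl: "\<forall>t. reachable I S u s t \<longrightarrow> reachable I S u t s"
  proof (intro allI impI)
    fix t assume r: "reachable I S u s t"
    have t: "t \<in> profiles I S" using reach_prof r s by blast
    have sub: "R t \<subseteq> R s" unfolding R_def using reach_trans[OF r] by blast
    have "R s \<subseteq> profiles I S" unfolding R_def using reach_prof s by blast
    hence fs: "finite (R s)" using fin finite_subset by blast
    have "R t = R s" using card_subset_eq[OF fs sub] mn t sub fs
      by (meson card_mono le_antisym)
    moreover have "s \<in> R s" unfolding R_def reachable_def by simp
    ultimately show "reachable I S u t s" unfolding R_def by blast
  qed
  thus ?thesis using sme_iff_closed[OF pot] s by blast
qed


lemma single_prof_eq: "s \<in> profiles {i} S \<Longrightarrow> t \<in> profiles {i} S \<Longrightarrow> t = s(i := t i)"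
  unfolding profiles_def
proof (rule ext)
  fix k assume s: "s \<in> Pi\<^sub>E {i} S" and t: "t \<in> Pi\<^sub>E {i} S"
  show "t k = (s(i := t i)) k"
  proof (cases "k = i")
    case True thus ?thesis by simp
  next
    case False thus ?thesis using PiE_arb[OF s, of k] PiE_arb[OF t, of k] by simp
  qed
qed

lemma single_arc:
  assumes "deploy_arc {i} S u s t" shows "u i s \<le> u i t"
proof -
  obtain j where "j \<in> {i}" "u j t \<ge> u j s" using assms unfolding deploy_arc_def by blast
  thus ?thesis by simp
qed

lemma single_arc_intro:
  assumes s: "s \<in> profiles {i} S" and t: "t \<in> profiles {i} S" and ne: "t \<noteq> s" and le: "u i s \<le> u i t"
  shows "deploy_arc {i} S u s t"
proof -
  have e: "t = s(i := t i)" by (rule single_prof_eq[OF s t])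
  have "\<exists>j\<in>{i}. t = s(j := t j) \<and> u j t \<ge> u j s"
    by (rule bexI[of _ i]) (use e le in auto)
  thus ?thesis unfolding deploy_arc_def using s t ne by (intro conjI)
qed

lemma single_reach: "reachable {i} S u s t \<Longrightarrow> u i s \<le> u i t"
  unfolding reachable_def
  by (induction rule: rtranclp_induct) (auto dest: single_arc)

lemma part2:
  assumes "ordinal_potential_game {i} S u"
  shows "SME {i} S u = {s \<in> profiles {i} S. \<forall>t\<in>profiles {i} S. u i t \<le> u i s}"
proof -
  obtain P where pot: "ordinal_potential {i} S u P" using assms ordinal_potential_game_def by blast
  { fix s assume s: "s \<in> profiles {i} S"
    have "(\<forall>t. reachable {i} S u s t \<longrightarrow> reachable {i} S u t s) \<longleftrightarrow> (\<forall>t\<in>profiles {i} S. u i t \<le> u i s)"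
    proof
      assume cl: "\<forall>t. reachable {i} S u s t \<longrightarrow> reachable {i} S u t s"
      show "\<forall>t\<in>profiles {i} S. u i t \<le> u i s"
      proof (intro ballI, rule ccontr)
        fix t assume t: "t \<in> profiles {i} S" and "\<not> u i t \<le> u i s"
        hence lt: "u i s < u i t" by simp
        hence "t \<noteq> s" by auto
        hence "deploy_arc {i} S u s t" using single_arc_intro[OF s t] lt by simp
        hence "reachable {i} S u t s" using cl reach_arc by blast
        hence "u i t \<le> u i s" by (rule single_reach)
        thus False using lt by simp
      qed
    next
      assume mx: "\<forall>t\<in>profiles {i} S. u i t \<le> u i s"
      show "\<forall>t. reachable {i} S u s t \<longrightarrow> reachable {i} S u t s"
      proof (intro allI impI)
        fix t assume r: "reachable {i} S u s t"
        have t: "t \<in> profiles {i} S" using reach_prof r s by blast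
        have eq: "u i t = u i s" using single_reach[OF r] mx t by fastforce
        show "reachable {i} S u t s"
        proof (cases "t = s")
          case True thus ?thesis unfolding reachable_def by simp
        next
          case False
          hence "deploy_arc {i} S u t s" using single_arc_intro[OF t s] eq by simp
          thus ?thesis using reach_arc by blast
        qed
      qed
    qed
  } note key = this
  show ?thesis
  proof (rule set_eqI)
    fix s
    show "s \<in> SME {i} S u \<longleftrightarrow> s \<in> {s \<in> profiles {i} S. \<forall>t\<in>profiles {i} S. u i t \<le> u i s}"
      unfolding sme_iff_closed[OF pot] using key[of s] by blast
  qed
qed

lemma closed_from_nash:
  assumes nh: "\<And>y. reachable I S u x y \<Longrightarrow> is_pure_nash I S u y" and r: "reachable I S u x y"
  shows "reachable I S u y x"
  using r unfolding reachable_def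
proof (induction rule: rtranclp_induct)
  case base show ?case by simp
next
  case (step y z)
  have "reachable I S u x y" using step(1) unfolding reachable_def .
  hence "is_pure_nash I S u y" using nh by blast
  hence "deploy_arc I S u z y" using nash_reverse step(2) by blast
  thus ?case using step(3) by (simp add: converse_rtranclp_into_rtranclp)
qed

lemma reach_map:
  assumes h: "\<And>a b. deploy_arc I S u a b \<Longrightarrow> deploy_arc I' S' u' (f a) (f b)"
    and r: "reachable I S u x y"
  shows "reachable I' S' u' (f x) (f y)"
  using r unfolding reachable_def
proof (induction rule: rtranclp_induct)
  case base show ?case by simp
next
  case (step b c)
  have "deploy_arc I' S' u' (f b) (f c)" using h step(2) .
  with step(3) show ?case by (metis rtranclp.rtrancl_into_rtrancl)
qed

lemma part3:
  assumes og: "ordinal_potential_game I S u" and Jne: "J \<noteq> {}" and JI: "J \<subset> I" and sS: "s \<in> SME I S u"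
  shows "ordinal_potential_game J S (reduced_payoff J s u) \<and>
               restrict s J \<in> SME J S (reduced_payoff J s u)"
proof -
  obtain P where pot: "ordinal_potential I S u P" using og ordinal_potential_game_def by blast
  have fg: "finite_game I S" using og ordinal_potential_game_def by blast
  have sc: "s \<in> profiles I S" "\<forall>t. reachable I S u s t \<longrightarrow> reachable I S u t s"
    using sS sme_iff_closed[OF pot, of s] by blast+
  define w where "w = reduced_payoff J s u"
  define ex where "ex \<sigma> = (\<lambda>k. if k \<in> J then \<sigma> k else s k)" for \<sigma>
  have wex: "w j \<sigma> = u j (ex \<sigma>)" for j \<sigma> unfolding w_def ex_def reduced_payoff_def by simp
  have exprof: "ex \<sigma> \<in> profiles I S" if "\<sigma> \<in> profiles J S" for \<sigma>
    unfolding PiE_iff profiles_def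
  proof (intro conjI ballI)
    fix i assume i: "i \<in> I"
    show "ex \<sigma> i \<in> S i"
      using that sc(1) i unfolding ex_def profiles_def by (cases "i \<in> J") (auto simp: PiE_iff)
  next
    show "ex \<sigma> \<in> extensional I"
      using that sc(1) JI unfolding ex_def profiles_def extensional_def PiE_iff by auto
  qed
  have exupd: "ex (\<sigma>(j := a)) = (ex \<sigma>)(j := a)" if "j \<in> J" for \<sigma> j a
    using that unfolding ex_def by (auto simp: fun_eq_iff)
  have exinj: "ex \<sigma> = ex \<tau> \<Longrightarrow> \<sigma> \<in> profiles J S \<Longrightarrow> \<tau> \<in> profiles J S \<Longrightarrow> \<sigma> = \<tau>" for \<sigma> \<tau>
  proof (rule ext)
    fix k assume eq: "ex \<sigma> = ex \<tau>" and s1: "\<sigma> \<in> profiles J S" and t1: "\<tau> \<in> profiles J S"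
    show "\<sigma> k = \<tau> k"
    proof (cases "k \<in> J")
      case True thus ?thesis using fun_cong[OF eq, of k] by (simp add: ex_def)
    next
      case False
      have "\<sigma> k = undefined" using s1 False unfolding profiles_def by (rule PiE_arb)
      moreover have "\<tau> k = undefined" using t1 False unfolding profiles_def by (rule PiE_arb)
      ultimately show ?thesis by simp
    qed
  qed
  have exs: "ex (restrict s J) = s" unfolding ex_def by auto
  have rprof: "restrict s J \<in> profiles J S" using sc(1) JI unfolding profiles_def by (auto simp: PiE_def)
  have potJ: "ordinal_potential J S w (\<lambda>\<sigma>. P (ex \<sigma>))"
    unfolding ordinal_potential_def
  proof (intro ballI)
    fix j a b \<sigma> assume j: "j \<in> J" and a: "a \<in> S j" and b: "b \<in> S j" and \<sigma>: "\<sigma> \<in> profiles J S"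
    have jI: "j \<in> I" using j JI by blast
    have "u j ((ex \<sigma>)(j := a)) > u j ((ex \<sigma>)(j := b)) \<longleftrightarrow> P ((ex \<sigma>)(j := a)) > P ((ex \<sigma>)(j := b))"
      by (rule pot[unfolded ordinal_potential_def, rule_format, OF jI a b exprof[OF \<sigma>]])
    thus "(w j (\<sigma>(j := a)) > w j (\<sigma>(j := b))) = (P (ex (\<sigma>(j := a))) > P (ex (\<sigma>(j := b))))"
      unfolding wex exupd[OF j] .
  qed
  have fgJ: "finite_game J S" using fg JI unfolding finite_game_def by (meson finite_subset psubset_imp_subset subsetD)
  have ogJ: "ordinal_potential_game J S w" using fgJ potJ unfolding ordinal_potential_game_def by blast
  have arcJ: "deploy_arc I S u (ex \<sigma>) (ex \<tau>)" if arc0: "deploy_arc J S w \<sigma> \<tau>" for \<sigma> \<tau>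
  proof -
    obtain j where j: "j \<in> J" "\<tau> = \<sigma>(j := \<tau> j)" "w j \<tau> \<ge> w j \<sigma>" and pr: "\<sigma> \<in> profiles J S" "\<tau> \<in> profiles J S" "\<tau> \<noteq> \<sigma>"
      using arc0 unfolding deploy_arc_def by blast
    have "ex \<tau> = ex (\<sigma>(j := \<tau> j))" by (rule arg_cong[where f=ex, OF j(2)])
    also have "\<dots> = (ex \<sigma>)(j := \<tau> j)" by (rule exupd[OF j(1)])
    also have "\<tau> j = ex \<tau> j" using j(1) by (simp add: ex_def)
    finally have "ex \<tau> = (ex \<sigma>)(j := ex \<tau> j)" .
    note eqx = this
    have nex: "ex \<tau> \<noteq> ex \<sigma>" using exinj[of \<tau> \<sigma>] pr by blast
    have jI: "j \<in> I" using j JI by blast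
    have le: "u j (ex \<tau>) \<ge> u j (ex \<sigma>)" using j(3) unfolding wex .
    have "\<exists>k\<in>I. ex \<tau> = (ex \<sigma>)(k := ex \<tau> k) \<and> u k (ex \<tau>) \<ge> u k (ex \<sigma>)"
      using conjI[OF eqx le] jI by (rule bexI)
    thus ?thesis unfolding deploy_arc_def using exprof[OF pr(1)] exprof[OF pr(2)] nex by (intro conjI)
  qed
  have reachJ: "reachable J S w \<sigma> \<tau> \<Longrightarrow> reachable I S u (ex \<sigma>) (ex \<tau>)" for \<sigma> \<tau>
    by (rule reach_map[of J S w I S u ex, OF arcJ])
  have nashJ: "is_pure_nash J S w y" if "reachable J S w (restrict s J) y" for y
  proof -
    have y: "y \<in> profiles J S" using reach_prof that rprof by blast
    have "reachable I S u s (ex y)" using reachJ[OF that] exs by simp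
    hence n: "is_pure_nash I S u (ex y)" by (rule closed_nash[OF pot sc(1) sc(2)])
    show ?thesis unfolding is_pure_nash_def
    proof (intro conjI ballI y)
      fix j a assume j: "j \<in> J" and a: "a \<in> S j"
      have jI: "j \<in> I" using j JI by blast
      have "u j ((ex y)(j := a)) \<le> u j (ex y)" using n jI a unfolding is_pure_nash_def by blast
      thus "w j (y(j := a)) \<le> w j y" unfolding wex exupd[OF j] .
    qed
  qed
  have clJ: "reachable J S w y (restrict s J)" if "reachable J S w (restrict s J) y" for y
    using closed_from_nash[OF nashJ that] .
  have "restrict s J \<in> SME J S w"
    by (rule sme_iff_closed[OF potJ, THEN iffD2]) (use rprof clJ in blast)
  thus ?thesis using ogJ unfolding w_def by blast
qed

theorem theorem3:
  shows "(\<forall>(I::'p set) (S::'p \<Rightarrow> 's set) u. ordinal_potential_game I S u \<longrightarrow> SME I S u \<noteq> {})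
       \<and> (\<forall>(i::'p) (S::'p \<Rightarrow> 's set) u. ordinal_potential_game {i} S u \<longrightarrow>
             SME {i} S u = {s \<in> profiles {i} S. \<forall>t\<in>profiles {i} S. u i t \<le> u i s})
       \<and> (\<forall>(I::'p set) (S::'p \<Rightarrow> 's set) u J s.
             ordinal_potential_game I S u \<and> J \<noteq> {} \<and> J \<subset> I \<and> s \<in> SME I S u \<longrightarrow>
               ordinal_potential_game J S (reduced_payoff J s u) \<and>
               restrict s J \<in> SME J S (reduced_payoff J s u))"
  using part1 part2 part3 by blast

end
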